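(* Let $m$ be a positive integer, $n=2^m$, and let $v\in\{\pm1\}^n$ have at most $\ell$ sign changes. Then $$\sum_{i\in\mathcal{T}}\ \sum_{j=0}^{2^i-1}2^{-(m-i)/2}\,\big|\langle\psi_{i,j},v\rangle\big|\le \ell\log_2 n+1,$$ where $\mathcal{T}=\{0_{\mathrm{father}},0_{\mathrm{mother}},1,\dots,m-1\}$ and the indices $0_{\mathrm{father}},0_{\mathrm{mother}}$ are given the numerical value $0$ in the summation range and in the weight $2^{-(m-i)/2}$.
   Context: A vector $v\in\{\pm1\}^n$ has at most $\ell$ sign changes if there are at most $\ell$ indices $i\in[n-1]$ with $v_{i+1}\ne v_i$. The Haar wavelet basis of $\mathbb{R}^n$ ($n=2^m$) is the orthonormal basis consisting of the father wavelet $\psi_{0_{\mathrm{father}},0}=n^{-1/2}(1,\dots,1)$, the mother wavelet $\psi_{0_{\mathrm{mother}},0}=n^{-1/2}(1,\dots,1,-1,\dots,-1)$ (with $n/2$ entries $1$ followed by $n/2$ entries $-1$), and, for every $1\le i<m$ and $0\le j<2^i$, the wavelet $\psi_{i,j}$ whose coordinates $2^{m-i}j+1,\dots,2^{m-i}j+2^{m-i-1}$ equal $2^{-(m-i)/2}$, whose coordinates $2^{m-i}j+2^{m-i-1}+1,\dots,2^{m-i}j+2^{m-i}$ equal $-2^{-(m-i)/2}$, and whose other coordinates are $0$. *)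

theory Defs
  imports Complex_Main
begin

text \<open>Vectors in R^n (n = 2^m) are represented as functions nat => real,
  coordinate k (1-based in the paper) corresponding to index k-1 here,
  so only indices 0..n-1 matter.\<close>

definition pm_one_vec :: "nat \<Rightarrow> (nat \<Rightarrow> real) \<Rightarrow> bool" where
  "pm_one_vec n v \<longleftrightarrow> (\<forall>k<n. v k = 1 \<or> v k = -1)"

definition sign_changes :: "nat \<Rightarrow> (nat \<Rightarrow> real) \<Rightarrow> nat" where
  "sign_changes n v = card {i. i + 1 < n \<and> v (i + 1) \<noteq> v i}"

definition inner_n :: "nat \<Rightarrow> (nat \<Rightarrow> real) \<Rightarrow> (nat \<Rightarrow> real) \<Rightarrow> real" where
  "inner_n n u v = (\<Sum>k<n. u k * v k)"

definition haar_father :: "nat \<Rightarrow> nat \<Rightarrow> real" where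
  "haar_father m k = (if k < 2^m then (2::real) powr (- real m / 2) else 0)"

definition haar_mother :: "nat \<Rightarrow> nat \<Rightarrow> real" where
  "haar_mother m k =
     (if k < 2^m div 2 then (2::real) powr (- real m / 2)
      else if k < 2^m then - ((2::real) powr (- real m / 2)) else 0)"

definition haar_psi :: "nat \<Rightarrow> nat \<Rightarrow> nat \<Rightarrow> nat \<Rightarrow> real" where
  "haar_psi m i j k =
     (if 2^(m-i) * j \<le> k \<and> k < 2^(m-i) * j + 2^(m-i-1)
        then (2::real) powr (- real (m - i) / 2)
      else if 2^(m-i) * j + 2^(m-i-1) \<le> k \<and> k < 2^(m-i) * j + 2^(m-i)
        then - ((2::real) powr (- real (m - i) / 2))
      else 0)"

end

theory Submission imports Defs begin

lemma const_block:
  fixes v :: "nat \<Rightarrow> real"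
  assumes "\<forall>k. a \<le> k \<and> k + 1 < a + s \<longrightarrow> v (k+1) = v k"
  shows "\<forall>k. a \<le> k \<and> k < a + s \<longrightarrow> v k = v a"
proof -
  have "a + t < a + s \<longrightarrow> v (a + t) = v a" for t
  proof (induction t)
    case (Suc t)
    then show ?case using assms[rule_format, of "a + t"] by auto
  qed simp
  thus ?thesis by (metis le_add_diff_inverse)
qed

lemma block_bound:
  fixes v :: "nat \<Rightarrow> real"
  assumes "i < m" "j < 2^i" "n = 2^m" "pm_one_vec n v"
  shows "2 powr (-real(m-i)/2) * \<bar>inner_n n (haar_psi m i j) v\<bar>
     \<le> (if \<exists>k. 2^(m-i)*j \<le> k \<and> k+1 < 2^(m-i)*j + 2^(m-i) \<and> v(k+1) \<noteq> v k then 1 else 0)"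
proof -
  define d where "d = m - i"
  define h :: nat where "h = 2^(d-1)"
  define s :: nat where "s = 2^d"
  define a where "a = s * j"
  define c :: real where "c = 2 powr (-real d/2)"
  have d1: "d \<ge> 1" using assms d_def by auto
  have sh: "s = 2*h" unfolding s_def h_def using d1
    by (metis Suc_diff_le diff_Suc_1 power_Suc)
  have "s * (j+1) \<le> s * 2^i" using assms(2) by (intro mult_le_mono2) auto
  also have "s * 2^i = n" unfolding s_def d_def using assms
    by (simp add: power_add[symmetric])
  finally have asn: "a + s \<le> n" unfolding a_def by (simp add: algebra_simps)
  have pd: "2^(m-i-1) = h" "2^(m-i) = s" using h_def s_def d_def by auto
  have hp: "haar_psi m i j k = (if a \<le> k \<and> k < a + h then c else if a + h \<le> k \<and> k < a + s then -c else 0)" for k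
    unfolding haar_psi_def pd a_def c_def d_def by (simp add: mult.commute)
  have "inner_n n (haar_psi m i j) v = (\<Sum>k\<in>{a..<a+s}. haar_psi m i j k * v k)"
    unfolding inner_n_def
    by (rule sum.mono_neutral_right) (use asn sh in \<open>auto simp: hp\<close>)
  also have "\<dots> = (\<Sum>k\<in>{a..<a+h}. haar_psi m i j k * v k) + (\<Sum>k\<in>{a+h..<a+s}. haar_psi m i j k * v k)"
    by (rule sum.atLeastLessThan_concat[symmetric]) (use sh in auto)
  also have "\<dots> = c * (\<Sum>k\<in>{a..<a+h}. v k) - c * (\<Sum>k\<in>{a+h..<a+s}. v k)"
    by (simp add: hp sum_distrib_left sum_negf[symmetric])
  finally have inner: "inner_n n (haar_psi m i j) v = c * ((\<Sum>k\<in>{a..<a+h}. v k) - (\<Sum>k\<in>{a+h..<a+s}. v k))"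
    by (simp add: algebra_simps)
  have cpos: "c > 0" unfolding c_def by simp
  have cc: "c * c = 1 / real s" unfolding c_def s_def
  proof -
    have "2 powr (-real d/2) * 2 powr (-real d/2) = (2::real) powr (-real d)"
      by (simp add: powr_add[symmetric])
    also have "\<dots> = 1 / 2 powr real d" by (simp add: powr_minus divide_inverse)
    also have "\<dots> = 1 / real (2^d)" by (simp add: powr_realpow)
    finally show "2 powr (-real d/2) * 2 powr (-real d/2) = 1 / real ((2::nat)^d)" .
  qed
  have vb: "\<bar>v k\<bar> \<le> 1" if "k < n" for k using assms(4) that unfolding pm_one_vec_def by force
  have A: "\<bar>\<Sum>k\<in>{a..<a+h}. v k\<bar> \<le> real h"
  proof -
    have "\<bar>\<Sum>k\<in>{a..<a+h}. v k\<bar> \<le> (\<Sum>k\<in>{a..<a+h}. \<bar>v k\<bar>)" by (rule sum_abs)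
    also have "\<dots> \<le> (\<Sum>k\<in>{a..<a+h}. 1)" by (rule sum_mono) (use vb asn sh in auto)
    finally show ?thesis by simp
  qed
  have B: "\<bar>\<Sum>k\<in>{a+h..<a+s}. v k\<bar> \<le> real h"
  proof -
    have "\<bar>\<Sum>k\<in>{a+h..<a+s}. v k\<bar> \<le> (\<Sum>k\<in>{a+h..<a+s}. \<bar>v k\<bar>)" by (rule sum_abs)
    also have "\<dots> \<le> (\<Sum>k\<in>{a+h..<a+s}. 1)" by (rule sum_mono) (use vb asn sh in auto)
    finally show ?thesis using sh by simp
  qed
  have lhs: "2 powr (-real(m-i)/2) * \<bar>inner_n n (haar_psi m i j) v\<bar>
     = (1 / real s) * \<bar>(\<Sum>k\<in>{a..<a+h}. v k) - (\<Sum>k\<in>{a+h..<a+s}. v k)\<bar>"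
    unfolding inner cc[symmetric] using cpos d_def c_def by (simp add: abs_mult)
  have le1: "(1 / real s) * \<bar>(\<Sum>k\<in>{a..<a+h}. v k) - (\<Sum>k\<in>{a+h..<a+s}. v k)\<bar> \<le> 1"
  proof -
    have "\<bar>(\<Sum>k\<in>{a..<a+h}. v k) - (\<Sum>k\<in>{a+h..<a+s}. v k)\<bar> \<le> real s"
      using A B sh by linarith
    moreover have "real s > 0" using s_def by simp
    ultimately show ?thesis by (simp add: divide_le_eq)
  qed
  show ?thesis
  proof (cases "\<exists>k. 2^(m-i)*j \<le> k \<and> k+1 < 2^(m-i)*j + 2^(m-i) \<and> v(k+1) \<noteq> v k")
    case True then show ?thesis using lhs le1 by simp
  next
    case False
    then have "\<forall>k. a \<le> k \<and> k + 1 < a + s \<longrightarrow> v (k+1) = v k" unfolding a_def pd by auto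
    from const_block[OF this] have cst: "\<forall>k. a \<le> k \<and> k < a + s \<longrightarrow> v k = v a" .
    have "(\<Sum>k\<in>{a..<a+h}. v k) = (\<Sum>k\<in>{a..<a+h}. v a)"
      by (rule sum.cong[OF refl], rule cst[rule_format]) (use sh in auto)
    moreover have "(\<Sum>k\<in>{a+h..<a+s}. v k) = (\<Sum>k\<in>{a+h..<a+s}. v a)"
      by (rule sum.cong[OF refl], rule cst[rule_format]) (use sh in auto)
    ultimately show ?thesis using lhs False sh by simp
  qed
qed


lemma level_bound:
  fixes v :: "nat \<Rightarrow> real"
  assumes "i < m" "n = 2^m" "pm_one_vec n v" "sign_changes n v \<le> l"
  shows "(\<Sum>j<2^i. 2 powr (-real(m-i)/2) * \<bar>inner_n n (haar_psi m i j) v\<bar>) \<le> real l"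
proof -
  define s :: nat where "s = 2^(m-i)"
  define P where "P j \<longleftrightarrow> (\<exists>k. s*j \<le> k \<and> k+1 < s*j + s \<and> v(k+1) \<noteq> v k)" for j
  define S where "S = {k. k + 1 < n \<and> v (k + 1) \<noteq> v k}"
  have finS: "finite S" unfolding S_def by (rule finite_subset[of _ "{..<n}"]) auto
  have cS: "card S \<le> l" using assms(4) unfolding sign_changes_def S_def .
  have "(\<Sum>j<2^i. 2 powr (-real(m-i)/2) * \<bar>inner_n n (haar_psi m i j) v\<bar>)
     \<le> (\<Sum>j<2^i. (if P j then 1 else 0))"
    by (rule sum_mono) (use block_bound[OF assms(1) _ assms(2,3)] in \<open>simp add: P_def s_def\<close>)
  also have "\<dots> = real (card {j\<in>{..<2^i}. P j})"
    by (simp add: sum.If_cases Int_def conj_commute)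
  also have "card {j\<in>{..<2^i}. P j} \<le> card ((\<lambda>k. k div s) ` S)"
  proof (rule card_mono)
    show "finite ((\<lambda>k. k div s) ` S)" using finS by simp
    show "{j \<in> {..<2 ^ i}. P j} \<subseteq> (\<lambda>k. k div s) ` S"
    proof
      fix j assume "j \<in> {j \<in> {..<2 ^ i}. P j}"
      then obtain k where j: "j < 2^i" and k: "s*j \<le> k" "k+1 < s*j + s" "v(k+1) \<noteq> v k"
        unfolding P_def by auto
      have spos: "s > 0" unfolding s_def by simp
      have "k div s = j" using k spos
        by (intro div_nat_eqI) auto
      moreover have "s * j + s \<le> n"
      proof -
        have "s * (j+1) \<le> s * 2^i" using j by (intro mult_le_mono2) auto
        also have "s * 2^i = n" unfolding s_def using assms by (simp add: power_add[symmetric])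
        finally show ?thesis by (simp add: algebra_simps)
      qed
      ultimately show "j \<in> (\<lambda>k. k div s) ` S" using k unfolding S_def by force
    qed
  qed
  also have "\<dots> \<le> card S" by (rule card_image_le[OF finS])
  finally show ?thesis using cS by linarith
qed


theorem lemma6p6:
  fixes m n l :: nat and v :: "nat \<Rightarrow> real"
  assumes "m \<ge> 1" and "n = 2 ^ m"
    and "pm_one_vec n v"
    and "sign_changes n v \<le> l"
  shows "(2::real) powr (- real m / 2) * \<bar>inner_n n (haar_father m) v\<bar>
       + (2::real) powr (- real m / 2) * \<bar>inner_n n (haar_mother m) v\<bar>
       + (\<Sum>i\<in>{1..<m}. \<Sum>j<2^i. (2::real) powr (- real (m - i) / 2)
              * \<bar>inner_n n (haar_psi m i j) v\<bar>)
       \<le> real l * log 2 (real n) + 1"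
proof -
  define c :: real where "c = 2 powr (- real m / 2)"
  define L where "L i = (\<Sum>j<2^i. (2::real) powr (- real (m - i) / 2)
              * \<bar>inner_n n (haar_psi m i j) v\<bar>)" for i
  have cpos: "c > 0" unfolding c_def by simp
  have cc: "c * c = 1 / real n"
  proof -
    have "2 powr (-real m/2) * 2 powr (-real m/2) = (2::real) powr (-real m)"
      by (simp add: powr_add[symmetric])
    also have "\<dots> = 1 / 2 powr real m" by (simp add: powr_minus divide_inverse)
    also have "\<dots> = 1 / real (2^m)" by (simp add: powr_realpow)
    finally show ?thesis unfolding c_def assms(2) .
  qed
  have npos: "real n > 0" using assms(2) by simp
  have vb: "\<bar>v k\<bar> \<le> 1" if "k < n" for k using assms(3) that unfolding pm_one_vec_def by force
  have father: "c * \<bar>inner_n n (haar_father m) v\<bar> \<le> 1"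
  proof -
    have "inner_n n (haar_father m) v = c * (\<Sum>k<n. v k)"
      unfolding inner_n_def haar_father_def c_def using assms(2) by (simp add: sum_distrib_left)
    hence "c * \<bar>inner_n n (haar_father m) v\<bar> = (1 / real n) * \<bar>\<Sum>k<n. v k\<bar>"
      using cpos cc by (simp add: abs_mult mult.assoc[symmetric])
    also have "\<bar>\<Sum>k<n. v k\<bar> \<le> real n"
    proof -
      have "\<bar>\<Sum>k<n. v k\<bar> \<le> (\<Sum>k<n. \<bar>v k\<bar>)" by (rule sum_abs)
      also have "\<dots> \<le> (\<Sum>k<n. 1)" by (rule sum_mono) (use vb in auto)
      finally show ?thesis by simp
    qed
    hence "(1 / real n) * \<bar>\<Sum>k<n. v k\<bar> \<le> 1" using npos by (simp add: divide_le_eq)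
    finally show ?thesis .
  qed
  have mother: "haar_mother m = haar_psi m 0 0"
  proof
    fix k
    have "(2::nat)^m div 2 = 2^(m-1)" using assms(1)
      by (metis Suc_diff_le diff_Suc_1 nonzero_mult_div_cancel_left power_Suc zero_neq_numeral)
    thus "haar_mother m k = haar_psi m 0 0 k" unfolding haar_mother_def haar_psi_def by simp
  qed
  have L0: "c * \<bar>inner_n n (haar_mother m) v\<bar> = L 0"
    unfolding L_def mother c_def by simp
  have "(\<Sum>i\<in>{0..<m}. L i) = L 0 + (\<Sum>i\<in>{1..<m}. L i)"
    using assms(1) by (simp add: sum.atLeast_Suc_lessThan)
  moreover have "(\<Sum>i\<in>{0..<m}. L i) \<le> (\<Sum>i\<in>{0..<m}. real l)"
    by (rule sum_mono) (use level_bound assms in \<open>simp add: L_def\<close>)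
  moreover have "log 2 (real n) = real m" using assms(2) by simp
  ultimately show ?thesis using father L0 unfolding L_def[symmetric] c_def[symmetric]
    by (simp add: mult.commute)
qed

end
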